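(* Work in second-order logic (with the Comprehension scheme) in the language whose only non-logical primitive is the binary relation $\in$, and assume only the axioms Extensionality, $\forall a\forall b(\forall x(x\in a\leftrightarrow x\in b)\to a=b)$, and Separation, $\forall F\forall a\exists b\forall x(x\in b\leftrightarrow (F(x)\wedge x\in a))$. Then the levels are well-ordered by membership. That is: (i) for every property $F$, if some level is $F$, then there is a level $s$ that is $F$ such that no level $r\in s$ is $F$; and (ii) for any levels $s,t$: $s\in t$ or $s=t$ or $t\in s$.
   Context: For a set $a$, its potentiation is $\mathrm{pot}(a)=\{x : \exists c(x\subseteq c\wedge c\in a)\}$, when this set exists (i.e. "$b=\mathrm{pot}(a)$" abbreviates $\forall x(x\in b\leftrightarrow\exists c(x\subseteq c\wedge c\in a))$). A set $h$ is a history iff for every $x\in h$, $x=\mathrm{pot}(x\cap h)$. A set $s$ is a level iff $s=\mathrm{pot}(h)$ for some history $h$. *)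

theory Defs
  imports Main
begin

text \<open>A structure is a type 'a with a binary relation mem (membership).
  Second-order quantification ranges over all predicates 'a \<Rightarrow> bool.\<close>

definition subs :: "('a \<Rightarrow> 'a \<Rightarrow> bool) \<Rightarrow> 'a \<Rightarrow> 'a \<Rightarrow> bool" where
  "subs mem x c \<longleftrightarrow> (\<forall>y. mem y x \<longrightarrow> mem y c)"

text \<open>is_pot mem b A : b = pot(A), where A is given as a property (class) of sets.\<close>
definition is_pot :: "('a \<Rightarrow> 'a \<Rightarrow> bool) \<Rightarrow> 'a \<Rightarrow> ('a \<Rightarrow> bool) \<Rightarrow> bool" where
  "is_pot mem b A \<longleftrightarrow> (\<forall>x. mem x b \<longleftrightarrow> (\<exists>c. subs mem x c \<and> A c))"

definition history :: "('a \<Rightarrow> 'a \<Rightarrow> bool) \<Rightarrow> 'a \<Rightarrow> bool" where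
  "history mem h \<longleftrightarrow> (\<forall>x. mem x h \<longrightarrow> is_pot mem x (\<lambda>c. mem c x \<and> mem c h))"

definition level :: "('a \<Rightarrow> 'a \<Rightarrow> bool) \<Rightarrow> 'a \<Rightarrow> bool" where
  "level mem s \<longleftrightarrow> (\<exists>h. history mem h \<and> is_pot mem s (\<lambda>c. mem c h))"

end

theory Submission
  imports Defs
begin

definition sc :: "('a \<Rightarrow> 'a \<Rightarrow> bool) \<Rightarrow> 'a \<Rightarrow> bool" where
  "sc mem q \<longleftrightarrow> (\<forall>x y. subs mem x y \<and> mem y q \<longrightarrow> mem x q)"

definition trs :: "('a \<Rightarrow> 'a \<Rightarrow> bool) \<Rightarrow> 'a \<Rightarrow> bool" where
  "trs mem q \<longleftrightarrow> (\<forall>x y. mem x y \<and> mem y q \<longrightarrow> mem x q)"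

lemma potI: "is_pot mem b A \<Longrightarrow> subs mem x c \<Longrightarrow> A c \<Longrightarrow> mem x b"
  unfolding is_pot_def by blast
lemma potE: "is_pot mem b A \<Longrightarrow> mem x b \<Longrightarrow> \<exists>c. subs mem x c \<and> A c"
  unfolding is_pot_def by blast
lemma subsD: "subs mem x c \<Longrightarrow> mem y x \<Longrightarrow> mem y c"
  unfolding subs_def by blast
lemma subsI: "(\<And>y. mem y x \<Longrightarrow> mem y c) \<Longrightarrow> subs mem x c"
  unfolding subs_def by blast
lemma subs_refl: "subs mem x x"
  unfolding subs_def by blast
lemma scD: "sc mem q \<Longrightarrow> subs mem x y \<Longrightarrow> mem y q \<Longrightarrow> mem x q"
  unfolding sc_def by blast
lemma trsD: "trs mem q \<Longrightarrow> mem x y \<Longrightarrow> mem y q \<Longrightarrow> mem x q"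
  unfolding trs_def by blast
lemma histD: "history mem h \<Longrightarrow> mem x h \<Longrightarrow> is_pot mem x (\<lambda>c. mem c x \<and> mem c h)"
  unfolding history_def by blast

lemma pot_sc: "is_pot mem q A \<Longrightarrow> sc mem q"
  unfolding sc_def is_pot_def subs_def by meson

lemma level_sc: "level mem q \<Longrightarrow> sc mem q"
  unfolding level_def using pot_sc by metis

lemma wf_sc:
  assumes sep: "\<forall>F a. \<exists>b. \<forall>x. mem x b \<longleftrightarrow> (F x \<and> mem x a)"
    and scC: "\<And>q. C q \<Longrightarrow> sc mem q"
    and s: "C s"
  shows "\<exists>q. C q \<and> \<not> (\<exists>r. mem r q \<and> C r)"
proof (rule ccontr)
  assume "\<not> ?thesis"
  hence H: "\<And>q. C q \<Longrightarrow> \<exists>r. mem r q \<and> C r" by blast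
  obtain J where J: "\<forall>x. mem x J \<longleftrightarrow> ((\<not> mem x x \<and> (\<forall>q. C q \<longrightarrow> mem x q)) \<and> mem x s)"
    using spec[OF spec[OF sep, of "\<lambda>x. \<not> mem x x \<and> (\<forall>q. C q \<longrightarrow> mem x q)"], of s] by blast
  have JC: "mem J q" if Cq: "C q" for q
  proof -
    obtain r where r: "mem r q" "C r" using H[OF Cq] by blast
    have "subs mem J r" using J r(2) by (intro subsI) blast
    then show ?thesis using scD[OF scC[OF Cq]] r(1) by blast
  qed
  have "mem J s" using JC s by blast
  then show False using J JC by blast
qed

lemma level_trs:
  assumes "level mem s" shows "trs mem s"
proof -
  obtain h where h: "history mem h" "is_pot mem s (\<lambda>c. mem c h)"
    using assms unfolding level_def by blast
  show ?thesis unfolding trs_def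
  proof (intro allI impI)
    fix x y assume xy: "mem x y \<and> mem y s"
    then obtain c where c: "subs mem y c" "mem c h" using potE[OF h(2)] by blast
    have xc: "mem x c" using subsD[OF c(1)] xy by blast
    have cp: "is_pot mem c (\<lambda>d. mem d c \<and> mem d h)" using histD[OF h(1) c(2)] .
    obtain d where "subs mem x d" "mem d c" "mem d h" using potE[OF cp xc] by blast
    then show "mem x s" using potI[OF h(2)] by blast
  qed
qed

lemma hist_trs:
  assumes sep: "\<forall>F a. \<exists>b. \<forall>x. mem x b \<longleftrightarrow> (F x \<and> mem x a)"
    and h: "history mem h" and c: "mem c h"
  shows "trs mem c"
proof (rule ccontr)
  assume nc: "\<not> trs mem c"
  let ?C = "\<lambda>c. mem c h \<and> \<not> trs mem c"
  have "\<exists>q. ?C q \<and> \<not> (\<exists>r. mem r q \<and> ?C r)"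
  proof (rule wf_sc[OF sep])
    fix q assume "?C q"
    then show "sc mem q" using histD[OF h] pot_sc by metis
  next
    show "?C c" using c nc by blast
  qed
  then obtain q where q: "mem q h" "\<not> trs mem q" and min: "\<And>r. mem r q \<Longrightarrow> mem r h \<Longrightarrow> trs mem r"
    by blast
  have qp: "is_pot mem q (\<lambda>d. mem d q \<and> mem d h)" using histD[OF h q(1)] .
  have "trs mem q" unfolding trs_def
  proof (intro allI impI)
    fix x y assume xy: "mem x y \<and> mem y q"
    then obtain e where e: "subs mem y e" "mem e q" "mem e h" using potE[OF qp] by blast
    have "mem x e" using subsD[OF e(1)] xy by blast
    have "subs mem x e" using trsD[OF min[OF e(2,3)]] \<open>mem x e\<close> by (intro subsI) blast
    then show "mem x q" using potI[OF qp] e by blast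
  qed
  then show False using q by blast
qed

lemma hist_level:
  assumes sep: "\<forall>F a. \<exists>b. \<forall>x. mem x b \<longleftrightarrow> (F x \<and> mem x a)"
    and h: "history mem h" and c: "mem c h"
  shows "level mem c"
proof -
  obtain k where k: "\<forall>x. mem x k \<longleftrightarrow> (mem x h \<and> mem x c)"
    using spec[OF spec[OF sep, of "\<lambda>x. mem x h"], of c] by blast
  have cp: "is_pot mem c (\<lambda>d. mem d c \<and> mem d h)" using histD[OF h c] .
  have "history mem k" unfolding history_def
  proof (intro allI impI)
    fix y assume "mem y k"
    hence y: "mem y h" "mem y c" using k by auto
    have yp: "is_pot mem y (\<lambda>d. mem d y \<and> mem d h)" using histD[OF h y(1)] .
    have "trs mem c" using hist_trs[OF sep h c] .
    hence yc: "\<And>d. mem d y \<Longrightarrow> mem d c" using y(2) trsD by fast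
    have "(\<lambda>d. mem d y \<and> mem d h) = (\<lambda>d. mem d y \<and> mem d k)" using yc k by auto
    then show "is_pot mem y (\<lambda>d. mem d y \<and> mem d k)" using yp by simp
  qed
  moreover have "(\<lambda>d. mem d c \<and> mem d h) = (\<lambda>d. mem d k)" using k by auto
  then have "is_pot mem c (\<lambda>d. mem d k)" using cp by simp
  ultimately show ?thesis unfolding level_def by blast
qed
theorem theorem12:
  fixes mem :: "'a \<Rightarrow> 'a \<Rightarrow> bool"
  assumes extensionality: "\<forall>a b. (\<forall>x. mem x a \<longleftrightarrow> mem x b) \<longrightarrow> a = b"
    and separation: "\<forall>F a. \<exists>b. \<forall>x. mem x b \<longleftrightarrow> (F x \<and> mem x a)"
  shows "(\<forall>F. (\<exists>s. level mem s \<and> F s) \<longrightarrow>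
            (\<exists>s. level mem s \<and> F s \<and> \<not> (\<exists>r. mem r s \<and> level mem r \<and> F r)))
       \<and> (\<forall>s t. level mem s \<and> level mem t \<longrightarrow> mem s t \<or> s = t \<or> mem t s)"
proof -
  have WF: "\<exists>s. level mem s \<and> F s \<and> \<not> (\<exists>r. mem r s \<and> level mem r \<and> F r)"
    if "level mem s0" "F s0" for F s0
  proof -
    have "\<exists>q. (\<lambda>q. level mem q \<and> F q) q \<and> \<not> (\<exists>r. mem r q \<and> (\<lambda>q. level mem q \<and> F q) r)"
    proof (rule wf_sc[OF separation])
      fix q assume "level mem q \<and> F q" then show "sc mem q" using level_sc[of mem q] by simp
    next
      show "level mem s0 \<and> F s0" using that by blast
    qed
    then show ?thesis by simp
  qed
  let ?cmp = "\<lambda>s t. mem s t \<or> s = t \<or> mem t s"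
  have TRI: "?cmp s t" if lst: "level mem s" "level mem t" for s t
  proof (rule ccontr)
    assume nst: "\<not> ?cmp s t"
    obtain s0 where s0: "level mem s0" "\<exists>t. level mem t \<and> \<not> ?cmp s0 t"
      and s0m: "\<And>r. mem r s0 \<Longrightarrow> level mem r \<Longrightarrow> \<forall>t. level mem t \<longrightarrow> ?cmp r t"
    proof -
      have "\<exists>s'. level mem s' \<and> (\<exists>t. level mem t \<and> \<not> ?cmp s' t) \<and> \<not> (\<exists>r. mem r s' \<and> level mem r \<and> (\<exists>t. level mem t \<and> \<not> ?cmp r t))"
        by (rule WF[of s "\<lambda>s. \<exists>t. level mem t \<and> \<not> ?cmp s t"]) (use lst nst in auto)
      then show ?thesis using that by blast
    qed
    obtain t0 where t0: "level mem t0" "\<not> ?cmp s0 t0"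
      and t0m: "\<And>r. mem r t0 \<Longrightarrow> level mem r \<Longrightarrow> ?cmp s0 r"
    proof -
      obtain t1 where "level mem t1" "\<not> ?cmp s0 t1" using s0(2) by blast
      from WF[of t1 "\<lambda>t. \<not> ?cmp s0 t", OF this]
      show ?thesis using that by blast
    qed
    have trs0: "trs mem s0" "trs mem t0" using level_trs[OF s0(1)] level_trs[OF t0(1)] by auto
    have sc0: "sc mem s0" "sc mem t0" using level_sc[OF s0(1)] level_sc[OF t0(1)] by auto
    have "\<forall>x. mem x s0 \<longleftrightarrow> mem x t0"
    proof (intro allI iffI)
      fix x assume x: "mem x s0"
      obtain h where h: "history mem h" "is_pot mem s0 (\<lambda>c. mem c h)"
        using s0(1) unfolding level_def by blast
      obtain c where c: "subs mem x c" "mem c h" using h(2) x unfolding is_pot_def by blast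
      have cl: "level mem c" using hist_level[OF separation h(1) c(2)] .
      have cs: "mem c s0" using h(2) c(2) unfolding is_pot_def subs_def by blast
      have "?cmp c t0" using s0m[OF cs cl] t0(1) by blast
      then have "mem c t0" using t0(2) cs trs0(1) unfolding trs_def by blast
      then show "mem x t0" using sc0(2) c(1) unfolding sc_def by blast
    next
      fix x assume x: "mem x t0"
      obtain h where h: "history mem h" "is_pot mem t0 (\<lambda>c. mem c h)"
        using t0(1) unfolding level_def by blast
      obtain c where c: "subs mem x c" "mem c h" using h(2) x unfolding is_pot_def by blast
      have cl: "level mem c" using hist_level[OF separation h(1) c(2)] .
      have cs: "mem c t0" using h(2) c(2) unfolding is_pot_def subs_def by blast
      have "?cmp s0 c" using t0m[OF cs cl] .
      then have "mem c s0" using t0(2) cs trs0(2) unfolding trs_def by blast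
      then show "mem x s0" using sc0(1) c(1) unfolding sc_def by blast
    qed
    then have "s0 = t0" using extensionality by blast
    then show False using t0(2) by blast
  qed
  show ?thesis
  proof (intro conjI allI impI)
    fix F assume "\<exists>s. level mem s \<and> F s"
    then obtain s0 where "level mem s0" "F s0" by blast
    then show "\<exists>s. level mem s \<and> F s \<and> \<not> (\<exists>r. mem r s \<and> level mem r \<and> F r)" by (rule WF)
  next
    fix s t assume "level mem s \<and> level mem t"
    then show "mem s t \<or> s = t \<or> mem t s" using TRI by blast
  qed
qed

end
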